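(* Let $z\in\mathbb{R}^n$ be a unit vector and $H$ a real symmetric $n\times n$ matrix, and set $H_+=(I-zz^T)H(I-zz^T)+zz^T$. Then $\operatorname{trace}\big((H_+-I)(H_+-H)\big)=0$; consequently $$\|(H-I)z\|^2\le \|H-I\|^2-\|H_+-I\|^2;$$ and furthermore $\lambda_{\min}(H_+)\ge\min\{\lambda_{\min}(H),1\}$.
   Context: For vectors, $\|\cdot\|$ is the Euclidean norm; for symmetric matrices, $\|\cdot\|$ is the norm induced by the inner product $\langle X,Y\rangle=\operatorname{trace}(XY)$ (the Frobenius norm). $\lambda_{\min}(H)$ denotes the smallest eigenvalue of $H$. *)

theory Defs
  imports "HOL-Analysis.Analysis"
begin

definition outer :: "real^'n \<Rightarrow> real^'n \<Rightarrow> real^'n^'n" where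
  "outer x y = (\<chi> i j. x$i * y$j)"

definition symmetric_mat :: "real^'n^'n \<Rightarrow> bool" where
  "symmetric_mat A \<longleftrightarrow> transpose A = A"

definition mat_inner :: "real^'n^'n \<Rightarrow> real^'n^'n \<Rightarrow> real" where
  "mat_inner X Y = trace (X ** Y)"

definition frob_norm :: "real^'n^'n \<Rightarrow> real" where
  "frob_norm X = sqrt (mat_inner X X)"

definition eigenvalues :: "real^'n^'n \<Rightarrow> real set" where
  "eigenvalues A = {c. \<exists>v. v \<noteq> 0 \<and> A *v v = c *\<^sub>R v}"

definition lambda_min :: "real^'n^'n \<Rightarrow> real" where
  "lambda_min A = Min (eigenvalues A)"

end

theory Submission imports Defs begin
lemma mm_diff_l: "(A::real^'n^'n) ** (B - C) = A**B - A**C"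
  by (simp add: vec_eq_iff matrix_matrix_mult_def algebra_simps sum_subtractf)
lemma mm_diff_r: "((A::real^'n^'n) - B) ** C = A**C - B**C"
  by (simp add: vec_eq_iff matrix_matrix_mult_def algebra_simps sum_subtractf)
lemma mm_add_r: "((A::real^'n^'n) + B) ** C = A**C + B**C"
  by (simp add: vec_eq_iff matrix_matrix_mult_def algebra_simps sum.distrib)
lemma outer_mv: "outer x y *v w = (y \<bullet> w) *\<^sub>R x"
  by (simp add: vec_eq_iff outer_def matrix_vector_mult_def inner_vec_def sum_distrib_left algebra_simps)
lemma outer_mm: "outer x y ** outer u w = (y \<bullet> u) *\<^sub>R outer x w"
  by (simp add: vec_eq_iff outer_def matrix_matrix_mult_def inner_vec_def sum_distrib_left sum_distrib_right algebra_simps)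
lemma trace_outer: "trace (outer x y ** B) = y \<bullet> (B *v x)"
  by (simp add: trace_def outer_def matrix_matrix_mult_def matrix_vector_mult_def inner_vec_def sum_distrib_left sum_distrib_right algebra_simps) (rule sum.swap)
lemma transpose_outer: "transpose (outer x x) = outer x x"
  by (simp add: vec_eq_iff outer_def transpose_def)
lemma sym_dot: assumes "symmetric_mat S" shows "(S *v x) \<bullet> y = x \<bullet> (S *v y)"
proof -
  have "S *v x = x v* S" using vector_transpose_matrix[of x S] assms
    by (metis symmetric_mat_def)
  then show ?thesis by (simp add: dot_lmul_matrix)
qed
lemma trace_sq_nonneg: assumes "symmetric_mat X" shows "trace ((X::real^'n^'n) ** X) \<ge> 0"
proof -
  have "trace (X ** X) = trace (X ** transpose X)" using assms by (simp add: symmetric_mat_def)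
  also have "\<dots> = (\<Sum>i\<in>UNIV. \<Sum>k\<in>UNIV. (X$i$k)^2)"
    by (simp add: trace_def matrix_matrix_mult_def transpose_def power2_eq_square)
  also have "\<dots> \<ge> 0" by (intro sum_nonneg) simp
  finally show ?thesis .
qed
lemma eig_finite: assumes "symmetric_mat S" shows "finite (eigenvalues S)"
proof -
  define f where "f c = (SOME v. v \<noteq> 0 \<and> S *v v = c *\<^sub>R v)" for c
  have fv: "f c \<noteq> 0 \<and> S *v f c = c *\<^sub>R f c" if "c \<in> eigenvalues S" for c
  proof -
    from that obtain v where "v \<noteq> 0 \<and> S *v v = c *\<^sub>R v" unfolding eigenvalues_def by blast
    then show ?thesis unfolding f_def by (rule someI)
  qed
  have inj: "inj_on f (eigenvalues S)"
  proof (rule inj_onI)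
    fix c d assume c: "c \<in> eigenvalues S" and d: "d \<in> eigenvalues S" and e: "f c = f d"
    have 1: "S *v f c = c *\<^sub>R f c" using fv[OF c] by blast
    have 2: "S *v f c = d *\<^sub>R f c" using fv[OF d] unfolding e[symmetric] by blast
    have "c *\<^sub>R f c = d *\<^sub>R f c" using 1 2 by metis
    then show "c = d" using scaleR_cancel_right[of c "f c" d] fv[OF c] by blast
  qed
  have orth: "pairwise orthogonal (f ` eigenvalues S)"
    unfolding pairwise_def orthogonal_def
  proof (intro ballI impI)
    fix u w assume u: "u \<in> f ` eigenvalues S" and w: "w \<in> f ` eigenvalues S" and ne: "u \<noteq> w"
    from u obtain c where c: "c \<in> eigenvalues S" and uc: "u = f c" by blast
    from w obtain d where d: "d \<in> eigenvalues S" and wd: "w = f d" by blast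
    have "c \<noteq> d" using ne uc wd by blast
    have "c * (f c \<bullet> f d) = (S *v f c) \<bullet> f d" using fv[OF c] by simp
    also have "\<dots> = f c \<bullet> (S *v f d)" by (rule sym_dot[OF assms])
    also have "\<dots> = d * (f c \<bullet> f d)" using fv[OF d] by simp
    finally have "f c \<bullet> f d = 0" using \<open>c \<noteq> d\<close> by simp
    then show "u \<bullet> w = 0" using uc wd by simp
  qed
  have z0: "0 \<notin> f ` eigenvalues S"
  proof
    assume "0 \<in> f ` eigenvalues S"
    then obtain c where "c \<in> eigenvalues S" and "0 = f c" by blast
    then show False using fv by metis
  qed
  have "independent (f ` eigenvalues S)" by (rule pairwise_orthogonal_independent[OF orth z0])
  then have "finite (f ` eigenvalues S)" by (rule finiteI_independent)
  then show ?thesis by (rule finite_imageD[OF _ inj])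
qed
lemma quad_lemma: fixes a b :: real assumes "\<And>t. a * t + b * t^2 \<ge> 0" shows "a = 0"
proof (rule ccontr)
  assume "a \<noteq> 0"
  define c where "c = \<bar>b\<bar> + 1"
  define t where "t = - a / c"
  have p: "c > 0" unfolding c_def by simp
  have "a * t + b * t^2 = a^2 * (b - c) / c^2"
    unfolding t_def using p by (simp add: field_simps power2_eq_square)
  moreover have "b - c < 0" unfolding c_def by linarith
  moreover have "a^2 > 0" using \<open>a \<noteq> 0\<close> by simp
  ultimately have "a * t + b * t^2 < 0" using p
    by (simp add: divide_neg_pos mult_pos_neg)
  then show False using assms[of t] by simp
qed
lemma rayleigh: fixes S :: "real^'n^'n" assumes sy: "symmetric_mat S"
  shows "eigenvalues S \<noteq> {} \<and> (\<forall>y. lambda_min S * (y \<bullet> y) \<le> y \<bullet> (S *v y))"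
proof -
  have ne: "sphere (0::real^'n) 1 \<noteq> {}" by simp
  have co: "continuous_on (sphere (0::real^'n) 1) (\<lambda>y. y \<bullet> (S *v y))"
    by (intro continuous_intros linear_continuous_on matrix_vector_mul_bounded_linear)
  obtain x where x: "x \<in> sphere 0 1" and xm: "\<And>y. y \<in> sphere 0 1 \<Longrightarrow> x \<bullet> (S *v x) \<le> y \<bullet> (S *v y)"
    using continuous_attains_inf[OF compact_sphere ne co] by blast
  define m where "m = x \<bullet> (S *v x)"
  have xx: "x \<bullet> x = 1" using x by (simp add: dot_square_norm)
  have all: "m * (y \<bullet> y) \<le> y \<bullet> (S *v y)" for y
  proof (cases "y = 0")
    case True then show ?thesis by simp
  next
    case False
    define u where "u = y /\<^sub>R norm y"
    have nz: "norm y > 0" using False by simp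
    have "u \<in> sphere 0 1" unfolding u_def using nz by simp
    then have "m \<le> u \<bullet> (S *v u)" using xm m_def by simp
    also have "u \<bullet> (S *v u) = (y \<bullet> (S *v y)) / (norm y)^2"
      unfolding u_def using nz by (simp add: matrix_vector_mult_scaleR power2_eq_square field_simps)
    finally have "m * (norm y)^2 \<le> y \<bullet> (S *v y)" using nz by (simp add: field_simps)
    then show ?thesis by (simp add: power2_norm_eq_inner)
  qed
  have orth: "y \<bullet> (S *v x) - m * (x \<bullet> y) = 0" for y
  proof -
  have "2 * (y \<bullet> (S *v x) - m * (x \<bullet> y)) = 0"
  proof (rule quad_lemma)
    fix t :: real
    have h: "m * ((x + t *\<^sub>R y) \<bullet> (x + t *\<^sub>R y)) \<le> (x + t *\<^sub>R y) \<bullet> (S *v (x + t *\<^sub>R y))"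
      by (rule all)
    have e1: "(x + t *\<^sub>R y) \<bullet> (x + t *\<^sub>R y) = 1 + 2 * t * (x \<bullet> y) + t^2 * (y \<bullet> y)"
      using xx by (simp add: inner_add_left inner_add_right inner_commute[of y x] power2_eq_square algebra_simps)
    have e2: "(x + t *\<^sub>R y) \<bullet> (S *v (x + t *\<^sub>R y)) = m + 2 * t * (y \<bullet> (S *v x)) + t^2 * (y \<bullet> (S *v y))"
    proof -
      have "x \<bullet> (S *v y) = y \<bullet> (S *v x)" using sym_dot[OF sy, of x y] by (simp add: inner_commute)
      then show ?thesis unfolding m_def
        by (simp add: algebra_simps matrix_vector_right_distrib matrix_vector_mult_scaleR power2_eq_square)
    qed
    have h2: "m * (1 + 2 * t * (x \<bullet> y) + t^2 * (y \<bullet> y)) \<le> m + 2 * t * (y \<bullet> (S *v x)) + t^2 * (y \<bullet> (S *v y))"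
      using h unfolding e1 e2 .
    have e3: "m * (1 + 2 * t * (x \<bullet> y) + t^2 * (y \<bullet> y)) = m + 2 * t * (m * (x \<bullet> y)) + t^2 * (m * (y \<bullet> y))"
      by (simp add: algebra_simps)
    have e4: "2 * (y \<bullet> (S *v x) - m * (x \<bullet> y)) * t + (y \<bullet> (S *v y) - m * (y \<bullet> y)) * t^2
       = (2 * t * (y \<bullet> (S *v x)) + t^2 * (y \<bullet> (S *v y))) - (2 * t * (m * (x \<bullet> y)) + t^2 * (m * (y \<bullet> y)))"
      by (simp add: algebra_simps)
    show "2 * (y \<bullet> (S *v x) - m * (x \<bullet> y)) * t + (y \<bullet> (S *v y) - m * (y \<bullet> y)) * t^2 \<ge> 0"
      using h2 e3 e4 by linarith
  qed
  then show ?thesis by simp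
  qed
  have "S *v x = m *\<^sub>R x"
  proof -
    define w where "w = S *v x - m *\<^sub>R x"
    have "w \<bullet> w = w \<bullet> (S *v x - m *\<^sub>R x)" using w_def by simp
    also have "\<dots> = w \<bullet> (S *v x) - m * (x \<bullet> w)" by (simp add: inner_diff_right inner_commute[of w x])
    also have "\<dots> = 0" using orth[of w] by simp
    finally have "w \<bullet> w = 0" .
    then show ?thesis unfolding w_def by simp
  qed
  moreover have "x \<noteq> 0" using x by auto
  ultimately have mE: "m \<in> eigenvalues S" unfolding eigenvalues_def by blast
  have "lambda_min S \<le> m" unfolding lambda_min_def using mE eig_finite[OF sy] by simp
  then have "lambda_min S * (y \<bullet> y) \<le> y \<bullet> (S *v y)" for y
    using all[of y] mult_right_mono[of "lambda_min S" m "y \<bullet> y"] by fastforce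
  then show ?thesis using mE by blast
qed
lemma transpose_diff': "transpose ((A::real^'n^'n) - B) = transpose A - transpose B"
  by (simp add: vec_eq_iff transpose_def)
lemma transpose_add': "transpose ((A::real^'n^'n) + B) = transpose A + transpose B"
  by (simp add: vec_eq_iff transpose_def)

theorem mainTheorem3:
  fixes z :: "real^'n" and H :: "real^'n^'n"
  assumes "norm z = 1"
    and "symmetric_mat H"
  defines "Hp \<equiv> (mat 1 - outer z z) ** H ** (mat 1 - outer z z) + outer z z"
  shows "trace ((Hp - mat 1) ** (Hp - H)) = 0 \<and>
    (norm ((H - mat 1) *v z))\<^sup>2 \<le> (frob_norm (H - mat 1))\<^sup>2 - (frob_norm (Hp - mat 1))\<^sup>2 \<and>
    lambda_min Hp \<ge> min (lambda_min H) 1"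
proof -
  have zz: "z \<bullet> z = 1" using assms(1) by (simp add: dot_square_norm)
  define Q where "Q = outer z z"
  define P where "P = mat 1 - Q"
  define A where "A = H - mat 1"
  define M where "M = P ** A ** P"
  have QQ: "Q ** Q = Q" unfolding Q_def by (simp add: outer_mm zz)
  have PP: "P ** P = P" unfolding P_def by (simp add: mm_diff_l mm_diff_r QQ)
  have symQ: "symmetric_mat Q" unfolding symmetric_mat_def Q_def by (rule transpose_outer)
  have symP: "symmetric_mat P" using symQ unfolding symmetric_mat_def P_def by (simp add: transpose_diff')
  have symA: "symmetric_mat A" using assms(2) unfolding symmetric_mat_def A_def by (simp add: transpose_diff')
  have symM: "symmetric_mat M" using symA symP unfolding symmetric_mat_def M_def
    by (simp add: matrix_transpose_mul matrix_mul_assoc)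
  have HpI: "Hp - mat 1 = M"
    unfolding Hp_def M_def A_def by (simp add: mm_diff_l mm_diff_r PP P_def[symmetric] Q_def[symmetric]) (simp add: P_def)
  have HpH: "Hp - H = M - A" unfolding A_def using HpI by (simp add: algebra_simps)
  have trMM: "trace (M ** M) = trace (M ** A)"
  proof -
    have "trace (M**M) = trace ((P**A**(P**P)**A) ** P)" by (simp only: M_def matrix_mul_assoc)
    also have "\<dots> = trace (P ** (P**A**(P**P)**A))" by (rule trace_mul_sym)
    also have "\<dots> = trace ((P**P)**A**(P**P)**A)" by (simp only: matrix_mul_assoc)
    also have "\<dots> = trace (M ** A)" by (simp add: PP M_def)
    finally show ?thesis .
  qed
  have part1: "trace ((Hp - mat 1) ** (Hp - H)) = 0"
    unfolding HpI HpH by (simp add: mm_diff_l trace_sub trMM)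
  define a where "a = z \<bullet> (A *v (A *v z))"
  define b where "b = z \<bullet> (A *v z)"
  have exp: "P**A**P**A = A**A - Q**A**A - A**Q**A + Q**A**Q**A"
    unfolding P_def by (simp add: mm_diff_l mm_diff_r mm_add_r algebra_simps)
  have t1: "trace (Q**A**A) = a"
  proof -
    have "trace (Q**A**A) = trace (Q**(A**A))" by (simp add: matrix_mul_assoc)
    then show ?thesis unfolding a_def Q_def by (simp add: trace_outer matrix_vector_mul_assoc)
  qed
  have t2: "trace (A**Q**A) = a"
  proof -
    have "trace ((A**Q)**A) = trace (A**(A**Q))" by (rule trace_mul_sym)
    also have "\<dots> = trace ((A**A)**Q)" by (simp add: matrix_mul_assoc)
    also have "\<dots> = trace (Q**(A**A))" by (rule trace_mul_sym)
    also have "\<dots> = trace (Q**A**A)" by (simp add: matrix_mul_assoc)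
    finally show ?thesis using t1 by simp
  qed
  have t3: "trace (Q**A**Q**A) = b^2"
  proof -
    have "trace (Q**A**Q**A) = trace (Q**(A**Q**A))" by (simp add: matrix_mul_assoc)
    also have "\<dots> = z \<bullet> (A *v (Q *v (A *v z)))"
      unfolding Q_def by (simp add: trace_outer matrix_vector_mul_assoc[symmetric])
    also have "\<dots> = b^2" unfolding Q_def b_def by (simp add: outer_mv matrix_vector_mult_scaleR power2_eq_square)
    finally show ?thesis .
  qed
  have trMA: "trace (M ** A) = trace (A**A) - 2*a + b^2"
    unfolding M_def exp by (simp add: trace_sub trace_add t1 t2 t3)
  have fA: "(frob_norm (H - mat 1))\<^sup>2 = trace (A**A)"
    unfolding frob_norm_def mat_inner_def A_def[symmetric] using trace_sq_nonneg[OF symA] by simp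
  have fM: "(frob_norm (Hp - mat 1))\<^sup>2 = trace (M**M)"
    unfolding frob_norm_def mat_inner_def HpI using trace_sq_nonneg[OF symM] by simp
  have nA: "(norm ((H - mat 1) *v z))\<^sup>2 = a"
    unfolding A_def[symmetric] a_def power2_norm_eq_inner by (rule sym_dot[OF symA])
  have ba: "b^2 \<le> a"
  proof -
    have "b^2 \<le> (z \<bullet> z) * ((A *v z) \<bullet> (A *v z))" unfolding b_def
      using Cauchy_Schwarz_ineq[of z "A *v z"] by simp
    also have "\<dots> = a" using zz sym_dot[OF symA, of z "A *v z"] unfolding a_def by simp
    finally show ?thesis .
  qed
  have part2: "(norm ((H - mat 1) *v z))\<^sup>2 \<le> (frob_norm (H - mat 1))\<^sup>2 - (frob_norm (Hp - mat 1))\<^sup>2"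
    unfolding nA fA fM trMM trMA using ba by simp
  have symHp: "symmetric_mat Hp"
  proof -
    have "Hp = M + mat 1" using HpI by (simp add: algebra_simps)
    then show ?thesis using symM unfolding symmetric_mat_def by (simp add: transpose_add')
  qed
  have Hpdef: "Hp = P ** H ** P + Q" unfolding Hp_def P_def Q_def ..
  have Pz: "P *v z = 0" unfolding P_def Q_def by (simp add: matrix_vector_mult_diff_rdistrib outer_mv zz)
  have Hpz: "Hp *v z = z" unfolding Hpdef
    by (simp add: matrix_vector_mult_add_rdistrib matrix_vector_mul_assoc[symmetric] Pz Q_def outer_mv zz)
  have z0: "z \<noteq> 0" using assms(1) by auto
  have "1 \<in> eigenvalues Hp" unfolding eigenvalues_def using Hpz z0 by (simp add: exI[of _ z])
  then have ne: "eigenvalues Hp \<noteq> {}" by blast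
  obtain ray: "\<forall>y. lambda_min H * (y \<bullet> y) \<le> y \<bullet> (H *v y)" using rayleigh[OF assms(2)] by blast
  have ev: "min (lambda_min H) 1 \<le> c" if c: "c \<in> eigenvalues Hp" for c
  proof (cases "c = 1")
    case True then show ?thesis by simp
  next
    case False
    obtain v where v0: "v \<noteq> 0" and hv: "Hp *v v = c *\<^sub>R v" using c unfolding eigenvalues_def by blast
    have "z \<bullet> v = c * (z \<bullet> v)" using sym_dot[OF symHp, of z v] Hpz hv by simp
    then have zv: "z \<bullet> v = 0" using False
      by (metis mult_cancel_right1)
    have Pv: "P *v v = v" unfolding P_def Q_def by (simp add: matrix_vector_mult_diff_rdistrib outer_mv zv)
    have Qv: "Q *v v = 0" unfolding Q_def by (simp add: outer_mv zv)
    have "Hp *v v = P *v (H *v v)" unfolding Hpdef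
      by (simp add: matrix_vector_mult_add_rdistrib matrix_vector_mul_assoc[symmetric] Pv Qv)
    moreover have "v \<bullet> (Hp *v v) = c * (v \<bullet> v)" using hv by simp
    ultimately have "c * (v \<bullet> v) = v \<bullet> (P *v (H *v v))" by simp
    also have "\<dots> = v \<bullet> (H *v v)" using sym_dot[OF symP, of v "H *v v"] Pv by simp
    finally have "lambda_min H * (v \<bullet> v) \<le> c * (v \<bullet> v)" using ray by simp
    moreover have "v \<bullet> v > 0" using v0 by simp
    ultimately have "lambda_min H \<le> c" by simp
    then show ?thesis by simp
  qed
  have part3: "lambda_min Hp \<ge> min (lambda_min H) 1"
    unfolding lambda_min_def[of Hp] using Min_ge_iff[OF eig_finite[OF symHp] ne] ev by blast
  show ?thesis using part1 part2 part3 by blast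
qed
end
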